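(* Let $w\in\mathcal L_n$. If $q'$ and $q$ are valid steps for $w$ in $\mathcal L$ with $q'<q$, then $\gcd(q,q')$ is also a valid step for $w$ in $\mathcal L$. In particular the minimal valid step of $w$ divides every valid step of $w$.
   Context: $\mathcal L$ is a language over a finite alphabet $\mathcal A$ (nonempty finite words, containing $\mathcal A$, closed under subwords, every word extendable on both sides), $\mathcal L_n$ its words of length $n$. For $n\ge2$, $w\in\mathcal A^n$ and an integer $1\le q\le n/2$ with $w_{[q+1,n]}=w_{[1,n-q]}$, $w^{q\ast r}$ is the word of length $n+(r-1)q$ with $(w^{q\ast r})_{[q(i-1)+1,q(i-1)+n]}=w$ for $1\le i\le r$; $q$ is a valid step for $w$ in $\mathcal L$ if moreover $w^{q\ast2}\in\mathcal L$. The minimal step of $w$ is the least valid step. *)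

theory Defs
  imports Main
begin

definition is_language :: "'a set \<Rightarrow> 'a list set \<Rightarrow> bool" where
  "is_language A L \<longleftrightarrow> finite A \<and>
     (\<forall>w\<in>L. w \<noteq> [] \<and> set w \<subseteq> A) \<and>
     (\<forall>a\<in>A. [a] \<in> L) \<and>
     (\<forall>u x v. u @ x @ v \<in> L \<and> x \<noteq> [] \<longrightarrow> x \<in> L) \<and>
     (\<forall>w\<in>L. \<exists>a\<in>A. \<exists>b\<in>A. a # w @ [b] \<in> L)"

text \<open>w^{q*r}: the word of length n+(r-1)q whose factor at positions
  [q(i-1)+1, q(i-1)+n] is w for 1 \<le> i \<le> r (0-based: drop (q(i-1)), take n).\<close>
definition qstar :: "'a list \<Rightarrow> nat \<Rightarrow> nat \<Rightarrow> 'a list" where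
  "qstar w q r = (THE u. length u = length w + (r - 1) * q \<and>
      (\<forall>i\<in>{1..r}. take (length w) (drop (q * (i - 1)) u) = w))"

definition valid_step :: "'a list set \<Rightarrow> 'a list \<Rightarrow> nat \<Rightarrow> bool" where
  "valid_step L w q \<longleftrightarrow> length w \<ge> 2 \<and> 1 \<le> q \<and> 2 * q \<le> length w \<and>
     drop q w = take (length w - q) w \<and> qstar w q 2 \<in> L"

definition min_step :: "'a list set \<Rightarrow> 'a list \<Rightarrow> nat" where
  "min_step L w = (LEAST q. valid_step L w q)"

end

theory Submission
  imports Defs
begin

definition per :: "'a list \<Rightarrow> nat \<Rightarrow> bool" where
  "per w p \<longleftrightarrow> (\<forall>i. i + p < length w \<longrightarrow> w ! i = w ! (i + p))"

lemma per_iff: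
  assumes "q \<le> length w"
  shows "drop q w = take (length w - q) w \<longleftrightarrow> per w q"
proof
  assume h: "drop q w = take (length w - q) w"
  show "per w q" unfolding per_def
  proof (intro allI impI)
    fix i assume "i + q < length w"
    then have "drop q w ! i = take (length w - q) w ! i" using h by simp
    then show "w ! i = w ! (i + q)" using \<open>i + q < length w\<close> by (simp add: add.commute)
  qed
next
  assume "per w q"
  then show "drop q w = take (length w - q) w"
    by (intro nth_equalityI) (auto simp: per_def add.commute)
qed

lemma per_mult:
  assumes "per w d" shows "i + k * d < length w \<Longrightarrow> w ! i = w ! (i + k * d)"
proof (induction k)
  case 0 then show ?case by simp
next
  case (Suc k)
  then have "w ! i = w ! (i + k * d)" by simp
  also have "\<dots> = w ! (i + k * d + d)" using assms Suc.prems unfolding per_def by simp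
  finally show ?case by (simp add: ac_simps)
qed

lemma per_sub:
  assumes "per w p" "per w q" "p < q" "p + q \<le> length w"
  shows "per w (q - p)"
  unfolding per_def
proof (intro allI impI)
  fix i assume i: "i + (q - p) < length w"
  show "w ! i = w ! (i + (q - p))"
  proof (cases "i + q < length w")
    case True
    then have "w ! i = w ! (i + q)" using assms(2) per_def by blast
    also have "\<dots> = w ! (i + (q - p))"
    proof -
      have "i + (q - p) + p < length w" using True \<open>p < q\<close> by simp
      then have "w ! (i + (q - p)) = w ! (i + (q - p) + p)" using assms(1) unfolding per_def by blast
      moreover have "i + (q - p) + p = i + q" using \<open>p < q\<close> by simp
      ultimately show ?thesis by simp
    qed
    finally show ?thesis .
  next
    case False
    then have ip: "i \<ge> p" using assms by linarith
    have a: "i - p + p < length w" using ip i \<open>p < q\<close> by simp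
    have "w ! (i - p) = w ! (i - p + p)" using assms(1) a unfolding per_def by blast
    then have 1: "w ! (i - p) = w ! i" using ip by simp
    have b: "i - p + q < length w" using ip i \<open>p < q\<close> by simp
    have 2: "w ! (i - p) = w ! (i - p + q)" using assms(2) b unfolding per_def by blast
    have "i - p + q = i + (q - p)" using ip \<open>p < q\<close> by simp
    then show ?thesis using 1 2 by simp
  qed
qed

lemma fine_wilf:
  "per w p \<Longrightarrow> per w q \<Longrightarrow> p + q \<le> length w \<Longrightarrow> per w (gcd p q)"
proof (induction "p + q" arbitrary: p q rule: less_induct)
  case less
  show ?case
  proof (cases "p = 0 \<or> q = 0")
    case True then show ?thesis using less by auto
  next
    case False
    consider "p = q" | "p < q" | "q < p" by linarith
    then show ?thesis
    proof cases
      case 1 then show ?thesis using less by simp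
    next
      case 2
      have "per w (q - p)" using per_sub[of w p q] less 2 by simp
      then have "per w (gcd p (q - p))" using less(1)[of p "q - p"] less 2 False by simp
      moreover have "gcd p (q - p) = gcd p q" using gcd_diff1_nat[of p q] 2
        by (simp add: gcd.commute)
      ultimately show ?thesis by simp
    next
      case 3
      have "per w (p - q)" using per_sub[of w q p] less 3 by simp
      then have "per w (gcd q (p - q))" using less(1)[of q "p - q"] less 3 False by simp
      moreover have "gcd q (p - q) = gcd p q" using gcd_diff1_nat[of q p] 3
        by (simp add: gcd.commute)
      ultimately show ?thesis by simp
    qed
  qed
qed

lemma qstar2:
  assumes "q \<le> length w" "drop q w = take (length w - q) w"
  shows "qstar w q 2 = w @ drop (length w - q) w"
  unfolding qstar_def
proof (rule the_equality)
  let ?u = "w @ drop (length w - q) w"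
  have "take (length w) (drop q ?u) = w"
  proof -
    have "drop q ?u = drop q w @ drop (length w - q) w" using assms by simp
    also have "\<dots> = take (length w - q) w @ drop (length w - q) w" using assms by simp
    finally show ?thesis by simp
  qed
  moreover have "{1..2::nat} = {1, 2}" by auto
  ultimately show "length ?u = length w + (2 - 1) * q \<and>
      (\<forall>i\<in>{1..2}. take (length w) (drop (q * (i - 1)) ?u) = w)" using assms by simp
next
  fix u assume h: "length u = length w + (2 - 1) * q \<and>
      (\<forall>i\<in>{1..2::nat}. take (length w) (drop (q * (i - 1)) u) = w)"
  then have l: "length u = length w + q" and t1: "take (length w) u = w"
    and t2: "take (length w) (drop q u) = w" by (auto dest: bspec[of _ _ 1] bspec[of _ _ 2])
  have d: "drop q u = w" using t2 l by simp
  have "drop (length w) u = drop (length w - q) (drop q u)" using assms l by simp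
  then have "drop (length w) u = drop (length w - q) w" using d by simp
  then show "u = w @ drop (length w - q) w" using t1 by (metis append_take_drop_id)
qed

lemma gcd_valid:
  assumes L: "is_language A L" and v1: "valid_step L w q'" and v2: "valid_step L w q" and lt: "q' < q"
  shows "valid_step L w (gcd q q')"
proof -
  let ?n = "length w" let ?d = "gcd q q'"
  have q'pos: "q' \<ge> 1" and "2 * q \<le> ?n" and n2: "?n \<ge> 2" using v1 v2 unfolding valid_step_def by auto
  have pq: "per w q" using v2 per_iff[of q w] unfolding valid_step_def by auto
  have pq': "per w q'" using v1 per_iff[of q' w] unfolding valid_step_def by auto
  have pd: "per w ?d" using fine_wilf[OF pq pq'] lt \<open>2 * q \<le> ?n\<close> by simp
  have dpos: "?d \<ge> 1" using q'pos by (simp add: Suc_le_eq)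
  have dle: "?d \<le> q'" using q'pos by (simp add: gcd_le2_nat)
  have dq: "?d dvd q" by simp
  have dleq: "?d \<le> q" using dle lt by simp
  have sh: "drop ?d w = take (?n - ?d) w" using per_iff[of ?d w] pd dle \<open>2*q \<le> ?n\<close> lt by simp
  have shq: "drop q w = take (?n - q) w" using v2 unfolding valid_step_def by simp
  have e1: "qstar w ?d 2 = w @ drop (?n - ?d) w" using qstar2[OF _ sh] dle lt \<open>2*q \<le> ?n\<close> by simp
  have e2: "qstar w q 2 = w @ drop (?n - q) w" using qstar2[OF _ shq] \<open>2*q \<le> ?n\<close> by simp
  have eqd: "drop (?n - ?d) w = take ?d (drop (?n - q) w)"
  proof (rule nth_equalityI)
    show "length (drop (?n - ?d) w) = length (take ?d (drop (?n - q) w))" using dleq \<open>2*q \<le> ?n\<close> by simp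
  next
    fix j assume "j < length (drop (?n - ?d) w)"
    then have j: "j < ?d" using dleq \<open>2*q \<le> ?n\<close> by simp
    obtain k where k: "q = ?d * k" using dq by (metis dvd_def)
    have kk: "q - ?d = (k - 1) * ?d" by (metis k diff_mult_distrib2 mult.commute mult_1_right)
    have "w ! (?n - q + j) = w ! (?n - q + j + (k - 1) * ?d)"
      using per_mult[OF pd, of "?n - q + j" "k - 1"] kk j dleq \<open>2*q \<le> ?n\<close> by simp
    moreover have "?n - q + j + (k - 1) * ?d = ?n - ?d + j" using kk dleq \<open>2*q \<le> ?n\<close> by simp
    ultimately show "drop (?n - ?d) w ! j = take ?d (drop (?n - q) w) ! j"
      using j dleq \<open>2*q \<le> ?n\<close> by simp
  qed
  have pre: "qstar w ?d 2 = take (?n + ?d) (qstar w q 2)"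
    using e1 e2 eqd by simp
  have inL: "qstar w q 2 \<in> L" using v2 unfolding valid_step_def by simp
  have sub: "\<forall>u x v. u @ x @ v \<in> L \<and> x \<noteq> [] \<longrightarrow> x \<in> L" using L unfolding is_language_def by blast
  have ne: "take (?n + ?d) (qstar w q 2) \<noteq> []" using n2 e2 by auto
  have "[] @ take (?n + ?d) (qstar w q 2) @ drop (?n + ?d) (qstar w q 2) \<in> L" using inL by simp
  then have "take (?n + ?d) (qstar w q 2) \<in> L" using sub ne by blast
  then have "qstar w ?d 2 \<in> L" using pre by simp
  then show ?thesis unfolding valid_step_def using n2 dpos dle \<open>2*q \<le> ?n\<close> lt sh by simp
qed

theorem mainTheorem11:
  fixes A :: "'a set" and L :: "'a list set" and w :: "'a list"
  assumes "is_language A L" and "w \<in> L"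
  shows "(\<forall>q q'. valid_step L w q' \<and> valid_step L w q \<and> q' < q
            \<longrightarrow> valid_step L w (gcd q q'))
       \<and> (\<forall>q. valid_step L w q \<longrightarrow> min_step L w dvd q)"
proof
  show A1: "\<forall>q q'. valid_step L w q' \<and> valid_step L w q \<and> q' < q
            \<longrightarrow> valid_step L w (gcd q q')"
    using gcd_valid[OF assms(1)] by blast
  show "\<forall>q. valid_step L w q \<longrightarrow> min_step L w dvd q"
  proof (intro allI impI)
    fix q assume vq: "valid_step L w q"
    let ?m = "min_step L w"
    have vm: "valid_step L w ?m" unfolding min_step_def using vq by (rule LeastI)
    have mq: "?m \<le> q" unfolding min_step_def using vq by (rule Least_le)
    show "?m dvd q"
    proof (cases "?m = q")
      case True then show ?thesis by simp
    next
      case False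
      then have lt: "?m < q" using mq by simp
      have vg: "valid_step L w (gcd q ?m)" using A1 vm vq lt by blast
      have "?m \<le> gcd q ?m" using vg unfolding min_step_def by (rule Least_le)
      moreover have "?m \<ge> 1" using vm unfolding valid_step_def by simp
      then have "gcd q ?m \<le> ?m" by (simp add: gcd_le2_nat)
      ultimately have "gcd q ?m = ?m" by simp
      then show ?thesis by (metis gcd_dvd1)
    qed
  qed
qed

end
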